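(* Under the hypotheses and with the construction of Theorem 1 (full approximate solution for nonnegativity constraints), there exist $\rho>0$, $\bar\mu\in(0,\hat\mu]$ and $C>0$ such that in the same regime (all $\mu\in(0,\bar\mu]$, $(x,\lambda)\in\mathcal B((x^*,\lambda^* ),\delta)$, $x>0,\lambda>0$, $\|(x,\lambda)-(x^\mu,\lambda^\mu)\|<\rho$, $\|F_\mu(x,\lambda)\|\le C_1\mu$): $$\|\Delta x^{ls}_{\mathcal I}-\Delta x^N_{\mathcal I}\|\le C\mu^2\quad\text{and}\quad \|\Delta\lambda^{ls}_{\mathcal I}-\Delta\lambda^N_{\mathcal I}\|\le C\mu^3 .$$
   Context: Problem: minimize $f(x)$ subject to $x\ge0$, $f$ twice continuously differentiable with locally Lipschitz Hessian; $H=\nabla^2f(x)$, $X=\mathrm{diag}(x)$, $\Lambda=\mathrm{diag}(\lambda)$, $e$ all-ones, Euclidean norms. $F_\mu(x,\lambda)=(\nabla f(x)-\lambda,\ \Lambda Xe-\mu e)$, $F'(x,\lambda)=\begin{bmatrix}H&-I\\\Lambda&X\end{bmatrix}$; Newton direction for $\mu^+=\sigma\mu$ ($\sigma\in(0,1)$) solves $F'(\Delta x^N,\Delta\lambda^N)=-F_{\mu^+}(x,\lambda)$. $(x^*,\lambda^* )$ satisfies $\nabla f(x^* )=\lambda^*$, $x^*,\lambda^*\ge0$, $x_i^*\lambda_i^*=0$, $x^*+\lambda^*>0$, $[\nabla^2f(x^* )]_{\mathcal I\mathcal I}\succ0$, $\mathcal A=\{i:x^*_i=0\}$, $\mathcal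 I=\{i:x^*_i>0\}$; $\delta,\hat\mu$ and the barrier trajectory $(x^\mu,\lambda^\mu)$ as usual ($F'$ nonsingular with bounded inverse on $\mathcal B((x^*,\lambda^* ),\delta)$; $F_\mu(x^\mu,\lambda^\mu)=0$, Lipschitz, $\|(x^\mu,\lambda^\mu)-(x^*,\lambda^* )\|\le C_4\mu$). $C_1>0$ fixed. Construction: $\Delta x_i\in\{\Delta x_i^S,\Delta x_i^C\}$ for $i\in\mathcal A$, with $\Delta x_i^S=-\frac{x_i[\nabla f(x)]_i-\mu^+}{x_iH_{ii}+\lambda_i}$, $\Delta x_i^C=-x_i+\mu^+/\lambda_i$; $\Delta x^{ls}_{\mathcal I}$ solves $(H_{\mathcal I\mathcal I}+X_{\mathcal I\mathcal I}^{-1}\Lambda_{\mathcal I\mathcal I})\Delta x^{ls}_{\mathcal I}=-(\nabla f(x)_{\mathcal I}+H_{\mathcal I\mathcal A}\Delta x_{\mathcal A})+\mu^+X_{\mathcal I\mathcal I}^{-1}e$; $\Delta\lambda^{ls}_{\mathcal I}=-\lambda_{\mathcal I}+\mu^+X_{\mathcal I\mathcal I}^{-1}e-X_{\mathcal I\mathcal I}^{-1}\Lambda_{\mathcal I\mathcal I}\Delta x^{ls}_{\mathcal I}$. *)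

theory Defs
  imports "HOL-Analysis.Analysis"
begin

text \<open>Vectors in R^n are rendered as real^'n; pairs (x,lambda) live in the product
 space whose norm is the Euclidean norm sqrt(|x|^2+|lambda|^2).
 g is the gradient of f, Hf its Hessian.\<close>

definition Fmu :: "(real^'n \<Rightarrow> real^'n) \<Rightarrow> real \<Rightarrow> real^'n \<Rightarrow> real^'n \<Rightarrow> (real^'n) \<times> (real^'n)" where
  "Fmu g mu x l = (g x - l, (\<chi> i. l$i * x$i - mu))"

definition Fprime :: "(real^'n \<Rightarrow> real^'n^'n) \<Rightarrow> real^'n \<Rightarrow> real^'n \<Rightarrow> (real^'n) \<times> (real^'n) \<Rightarrow> (real^'n) \<times> (real^'n)" where
  "Fprime Hf x l w = (Hf x *v fst w - snd w, (\<chi> i. l$i * fst w $ i + x$i * snd w $ i))"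

definition restr :: "'n set \<Rightarrow> real^'n \<Rightarrow> real^'n" where
  "restr S v = (\<chi> i. if i \<in> S then v$i else 0)"

definition dxS :: "(real^'n \<Rightarrow> real^'n) \<Rightarrow> (real^'n \<Rightarrow> real^'n^'n) \<Rightarrow> real \<Rightarrow> real^'n \<Rightarrow> real^'n \<Rightarrow> 'n \<Rightarrow> real" where
  "dxS g Hf mup x l i = - (x$i * g x $ i - mup) / (x$i * Hf x $ i $ i + l$i)"

definition dxC :: "real \<Rightarrow> real^'n \<Rightarrow> real^'n \<Rightarrow> 'n \<Rightarrow> real" where
  "dxC mup x l i = - x$i + mup / l$i"

text \<open>The reduced (I-block) system defining Delta x^ls_I, given the A-components dxA.\<close>
definition ls_system :: "(real^'n \<Rightarrow> real^'n) \<Rightarrow> (real^'n \<Rightarrow> real^'n^'n) \<Rightarrow> 'n set \<Rightarrow> 'n set \<Rightarrow> real \<Rightarrow> real^'n \<Rightarrow> real^'n \<Rightarrow> ('n \<Rightarrow> real) \<Rightarrow> real^'n \<Rightarrow> bool" where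
  "ls_system g Hf A I mup x l dxA d \<longleftrightarrow>
     (\<forall>i\<in>I. (\<Sum>j\<in>I. Hf x $ i $ j * d$j) + l$i / x$i * d$i
            = - (g x $ i + (\<Sum>j\<in>A. Hf x $ i $ j * dxA j)) + mup / x$i)"

definition dl_ls :: "real \<Rightarrow> real^'n \<Rightarrow> real^'n \<Rightarrow> real^'n \<Rightarrow> real^'n" where
  "dl_ls mup x l d = (\<chi> i. - l$i + mup / x$i - l$i / x$i * d$i)"

end

theory Submission
  imports Defs
begin


lemma mv_comp_bound:
  fixes A :: "real^'n^'m" and z :: "real^'n"
  shows "\<bar>(A *v z)$i\<bar> \<le> real CARD('n) * norm A * norm z"
proof -
  have "\<bar>(A *v z)$i\<bar> = \<bar>\<Sum>j\<in>UNIV. A$i$j * z$j\<bar>" by (simp add: matrix_vector_mult_def)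
  also have "\<dots> \<le> (\<Sum>j\<in>UNIV. \<bar>A$i$j * z$j\<bar>)" by (rule sum_abs)
  also have "\<dots> \<le> (\<Sum>j\<in>(UNIV::'n set). norm A * norm z)"
  proof (rule sum_mono)
    fix j
    have a: "\<bar>A$i$j\<bar> \<le> norm A" proof -
      have "norm (A$i) \<le> norm A" by (rule Finite_Cartesian_Product.norm_nth_le)
      moreover have "\<bar>A$i$j\<bar> \<le> norm (A$i)" by (rule component_le_norm_cart)
      ultimately show ?thesis by linarith
    qed
    have b: "\<bar>z$j\<bar> \<le> norm z" by (rule component_le_norm_cart)
    show "\<bar>A$i$j * z$j\<bar> \<le> norm A * norm z" unfolding abs_mult
      by (rule mult_mono[OF a b]) auto
  qed
  also have "\<dots> = real CARD('n) * norm A * norm z" by simp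
  finally show ?thesis .
qed

lemma sum_bound_card:
  fixes v :: "real^'n"
  assumes "\<And>i. \<bar>v$i\<bar> \<le> B"
  shows "norm v \<le> real CARD('n) * B"
proof -
  have "norm v \<le> (\<Sum>i\<in>UNIV. \<bar>v$i\<bar>)" by (rule norm_le_l1_cart)
  also have "\<dots> \<le> (\<Sum>i\<in>(UNIV::'n set). B)" by (rule sum_mono) (rule assms)
  also have "\<dots> = real CARD('n) * B" by simp
  finally show ?thesis .
qed

theorem mainTheorem7:
  fixes f :: "real^'n \<Rightarrow> real" and g :: "real^'n \<Rightarrow> real^'n" and Hf :: "real^'n \<Rightarrow> real^'n^'n"
    and xs ls :: "real^'n" and A I :: "'n set"
    and \<delta> \<mu>h C1 C4 \<sigma> :: real and xt lt :: "real \<Rightarrow> real^'n"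
  assumes grad: "\<And>x. (f has_derivative (\<lambda>h. g x \<bullet> h)) (at x)"
    and hess: "\<And>x. (g has_derivative (\<lambda>h. Hf x *v h)) (at x)"
    and hess_loclip: "\<And>x. \<exists>e>0. \<exists>L. \<forall>y\<in>ball x e. \<forall>z\<in>ball x e. norm (Hf y - Hf z) \<le> L * norm (y - z)"
    and kkt: "g xs = ls" "\<And>i. xs$i \<ge> 0" "\<And>i. ls$i \<ge> 0" "\<And>i. xs$i * ls$i = 0"
    and strict: "\<And>i. xs$i + ls$i > 0"
    and A_def: "A = {i. xs$i = 0}" and I_def: "I = {i. xs$i > 0}"
    and pd: "\<And>v. v \<noteq> 0 \<Longrightarrow> (\<forall>i\<in>A. v$i = 0) \<Longrightarrow> v \<bullet> (Hf xs *v v) > 0"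
    and \<delta>pos: "\<delta> > 0" and \<mu>hpos: "\<mu>h > 0"
    and Fprime_inv: "\<exists>K. \<forall>p\<in>ball (xs, ls) \<delta>. \<forall>w. norm w \<le> K * norm (Fprime Hf (fst p) (snd p) w)"
    and traj: "\<And>\<mu>. 0 < \<mu> \<Longrightarrow> \<mu> \<le> \<mu>h \<Longrightarrow> Fmu g \<mu> (xt \<mu>) (lt \<mu>) = 0"
    and traj_pos: "\<And>\<mu> i. 0 < \<mu> \<Longrightarrow> \<mu> \<le> \<mu>h \<Longrightarrow> xt \<mu> $ i > 0 \<and> lt \<mu> $ i > 0"
    and traj_lip: "\<exists>L. \<forall>\<mu>\<in>{0<..\<mu>h}. \<forall>\<nu>\<in>{0<..\<mu>h}. norm ((xt \<mu>, lt \<mu>) - (xt \<nu>, lt \<nu>)) \<le> L * \<bar>\<mu> - \<nu>\<bar>"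
    and traj_bound: "\<And>\<mu>. 0 < \<mu> \<Longrightarrow> \<mu> \<le> \<mu>h \<Longrightarrow> norm ((xt \<mu>, lt \<mu>) - (xs, ls)) \<le> C4 * \<mu>"
    and \<sigma>: "0 < \<sigma>" "\<sigma> < 1" and C1pos: "C1 > 0"
  shows "\<exists>\<rho>>0. \<exists>\<mu>b. 0 < \<mu>b \<and> \<mu>b \<le> \<mu>h \<and> (\<exists>C>0.
     \<forall>\<mu> x l dxA d dxN dlN.
        0 < \<mu> \<longrightarrow> \<mu> \<le> \<mu>b \<longrightarrow>
        (x, l) \<in> ball (xs, ls) \<delta> \<longrightarrow>
        (\<forall>i. x$i > 0 \<and> l$i > 0) \<longrightarrow>
        norm ((x, l) - (xt \<mu>, lt \<mu>)) < \<rho> \<longrightarrow>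
        norm (Fmu g \<mu> x l) \<le> C1 * \<mu> \<longrightarrow>
        (\<forall>i\<in>A. dxA i = dxS g Hf (\<sigma> * \<mu>) x l i \<or> dxA i = dxC (\<sigma> * \<mu>) x l i) \<longrightarrow>
        ls_system g Hf A I (\<sigma> * \<mu>) x l dxA d \<longrightarrow>
        Fprime Hf x l (dxN, dlN) = - Fmu g (\<sigma> * \<mu>) x l \<longrightarrow>
        norm (restr I d - restr I dxN) \<le> C * \<mu>^2 \<and>
        norm (restr I (dl_ls (\<sigma> * \<mu>) x l d) - restr I dlN) \<le> C * \<mu>^3)"
proof -
  from Fprime_inv obtain K where K: "\<forall>p\<in>ball (xs, ls) \<delta>. \<forall>w. norm w \<le> K * norm (Fprime Hf (fst p) (snd p) w)" by blast
  define Kp where "Kp = \<bar>K\<bar>"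
  have Kp0: "Kp \<ge> 0" unfolding Kp_def by simp
  have Kb: "norm w \<le> Kp * norm (Fprime Hf x l w)" if "(x,l) \<in> ball (xs,ls) \<delta>" for x l w
  proof -
    have "norm w \<le> K * norm (Fprime Hf x l w)" using K that by fastforce
    also have "\<dots> \<le> Kp * norm (Fprime Hf x l w)" unfolding Kp_def
      by (rule mult_right_mono) auto
    finally show ?thesis .
  qed
  from hess_loclip[of xs] obtain e L where e: "e > 0"
    and eL: "\<forall>y\<in>ball xs e. \<forall>z\<in>ball xs e. norm (Hf y - Hf z) \<le> L * norm (y - z)" by blast
  define M where "M = norm (Hf xs) + \<bar>L\<bar> * e"
  have M0: "M \<ge> 0" unfolding M_def using e by simp
  have Mb: "norm (Hf y) \<le> M" if "norm (y - xs) < e" for y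
  proof -
    have y: "y \<in> ball xs e" using that by (simp add: dist_norm norm_minus_commute)
    have "norm (Hf y - Hf xs) \<le> L * norm (y - xs)" using eL y e by auto
    also have "\<dots> \<le> \<bar>L\<bar> * e" using that
      by (metis abs_ge_self abs_ge_zero dual_order.trans less_eq_real_def mult_mono norm_ge_zero)
    finally have "norm (Hf y - Hf xs) \<le> \<bar>L\<bar> * e" .
    moreover have "norm (Hf y) \<le> norm (Hf xs) + norm (Hf y - Hf xs)" by (metis norm_triangle_sub add.commute)
    ultimately show ?thesis unfolding M_def by linarith
  qed
  define m where "m = Min (range (\<lambda>i. xs$i + ls$i))"
  have mle: "m \<le> xs$i + ls$i" for i unfolding m_def by (rule Min_le) auto
  have "m \<in> range (\<lambda>i. xs$i + ls$i)" unfolding m_def by (rule Min_in) auto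
  then have mpos: "m > 0" using strict by auto
  define nn where "nn = real CARD('n)"
  have nn1: "nn \<ge> 1" unfolding nn_def by simp
  define cA where "cA = 2*(1+C1)/m"
  have cA0: "cA > 0" unfolding cA_def using mpos C1pos by simp
  define Mz where "Mz = nn * M"
  have Mz0: "Mz \<ge> 0" "M \<le> Mz" unfolding Mz_def using M0 nn1 by (simp, metis mult_le_cancel_right1 nn1 M0 mult.commute mult_right_mono mult_1)
  define \<alpha> where "\<alpha> = Kp * nn * cA"
  have \<alpha>0: "\<alpha> \<ge> 0" unfolding \<alpha>_def using Kp0 nn1 cA0 by simp
  define K2 where "K2 = Kp * (C1 + nn)"
  have K20: "K2 \<ge> 0" unfolding K2_def using Kp0 nn1 C1pos by simp
  define \<eta> where "\<eta> = min (m/2) (e/2)"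
  have \<eta>0: "\<eta> > 0" unfolding \<eta>_def using mpos e by simp
  define \<rho> where "\<rho> = \<eta>/2"
  define \<mu>b where "\<mu>b = min \<mu>h (min (\<eta>/(2*(\<bar>C4\<bar>+1))) (min (m/(4*(cA*M+1))) (1/(4*(Mz*\<alpha>+1)))))"
  have pp1: "cA*M \<ge> 0" "Mz*\<alpha> \<ge> 0" using cA0 M0 Mz0 \<alpha>0 by auto
  have \<mu>b0: "\<mu>b > 0" unfolding \<mu>b_def using \<mu>hpos \<eta>0 mpos pp1
    by (simp add: add_pos_nonneg)
  define Cx where "Cx = 2*\<alpha>*(2*Mz*K2 + C1)"
  define Cl1 where "Cl1 = (1+C1) * 4/m^2 * Cx"
  define Cl where "Cl = nn * Cl1"
  have Cx0: "Cx \<ge> 0" unfolding Cx_def using \<alpha>0 Mz0 K20 C1pos by simp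
  have Cl10: "Cl1 \<ge> 0" unfolding Cl1_def using Cx0 C1pos mpos by simp
  have Cl0: "Cl \<ge> 0" unfolding Cl_def using Cl10 nn1 by simp
  define C where "C = Cx + Cl + 1"
  show ?thesis
  proof (rule exI[of _ \<rho>], intro conjI)
    show "\<rho> > 0" unfolding \<rho>_def using \<eta>0 by simp
  next show "\<exists>\<mu>b. 0 < \<mu>b \<and> \<mu>b \<le> \<mu>h \<and> (\<exists>C>0.
     \<forall>\<mu> x l dxA d dxN dlN.
        0 < \<mu> \<longrightarrow> \<mu> \<le> \<mu>b \<longrightarrow>
        (x, l) \<in> ball (xs, ls) \<delta> \<longrightarrow>
        (\<forall>i. x$i > 0 \<and> l$i > 0) \<longrightarrow>
        norm ((x, l) - (xt \<mu>, lt \<mu>)) < \<rho> \<longrightarrow>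
        norm (Fmu g \<mu> x l) \<le> C1 * \<mu> \<longrightarrow>
        (\<forall>i\<in>A. dxA i = dxS g Hf (\<sigma> * \<mu>) x l i \<or> dxA i = dxC (\<sigma> * \<mu>) x l i) \<longrightarrow>
        ls_system g Hf A I (\<sigma> * \<mu>) x l dxA d \<longrightarrow>
        Fprime Hf x l (dxN, dlN) = - Fmu g (\<sigma> * \<mu>) x l \<longrightarrow>
        norm (restr I d - restr I dxN) \<le> C * \<mu>^2 \<and>
        norm (restr I (dl_ls (\<sigma> * \<mu>) x l d) - restr I dlN) \<le> C * \<mu>^3)"
  proof (rule exI[of _ \<mu>b], intro conjI)
    show "0 < \<mu>b" by (rule \<mu>b0)
    show "\<mu>b \<le> \<mu>h" unfolding \<mu>b_def by simp
  next
  show "\<exists>C>0.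
     \<forall>\<mu> x l dxA d dxN dlN.
        0 < \<mu> \<longrightarrow> \<mu> \<le> \<mu>b \<longrightarrow>
        (x, l) \<in> ball (xs, ls) \<delta> \<longrightarrow>
        (\<forall>i. x$i > 0 \<and> l$i > 0) \<longrightarrow>
        norm ((x, l) - (xt \<mu>, lt \<mu>)) < \<rho> \<longrightarrow>
        norm (Fmu g \<mu> x l) \<le> C1 * \<mu> \<longrightarrow>
        (\<forall>i\<in>A. dxA i = dxS g Hf (\<sigma> * \<mu>) x l i \<or> dxA i = dxC (\<sigma> * \<mu>) x l i) \<longrightarrow>
        ls_system g Hf A I (\<sigma> * \<mu>) x l dxA d \<longrightarrow>
        Fprime Hf x l (dxN, dlN) = - Fmu g (\<sigma> * \<mu>) x l \<longrightarrow>
        norm (restr I d - restr I dxN) \<le> C * \<mu>^2 \<and>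
        norm (restr I (dl_ls (\<sigma> * \<mu>) x l d) - restr I dlN) \<le> C * \<mu>^3"
  proof (rule exI[of _ C], intro conjI allI impI)
    show "C > 0" unfolding C_def using Cx0 Cl0 by simp
  next
    fix \<mu> x l dxA d dxN dlN
    assume \<mu>0: "0 < \<mu>" and \<mu>le: "\<mu> \<le> \<mu>b"
      and inball: "(x, l) \<in> ball (xs, ls) \<delta>"
      and pos: "\<forall>i. x$i > 0 \<and> l$i > 0"
      and near: "norm ((x, l) - (xt \<mu>, lt \<mu>)) < \<rho>"
      and Fb: "norm (Fmu g \<mu> x l) \<le> C1 * \<mu>"
      and dxAc: "\<forall>i\<in>A. dxA i = dxS g Hf (\<sigma> * \<mu>) x l i \<or> dxA i = dxC (\<sigma> * \<mu>) x l i"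
      and lss: "ls_system g Hf A I (\<sigma> * \<mu>) x l dxA d"
      and newton: "Fprime Hf x l (dxN, dlN) = - Fmu g (\<sigma> * \<mu>) x l"
    have \<mu>h: "\<mu> \<le> \<mu>h" using \<mu>le unfolding \<mu>b_def by simp
    have \<mu>1: "\<mu> \<le> \<eta>/(2*(\<bar>C4\<bar>+1))" using \<mu>le unfolding \<mu>b_def by simp
    have \<mu>2: "\<mu> \<le> m/(4*(cA*M+1))" using \<mu>le unfolding \<mu>b_def by simp
    have \<mu>3: "\<mu> \<le> 1/(4*(Mz*\<alpha>+1))" using \<mu>le unfolding \<mu>b_def by simp
    have "C4 * \<mu> \<le> \<bar>C4\<bar> * (\<eta>/(2*(\<bar>C4\<bar>+1)))"
      by (metis \<mu>0 \<mu>1 abs_ge_self abs_ge_zero less_eq_real_def mult_mono mult_right_mono order_trans)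
    also have "\<dots> \<le> \<eta>/2" using \<eta>0 by (simp add: field_simps)
    finally have c4: "C4 * \<mu> \<le> \<eta>/2" .
    have dist: "norm ((x, l) - (xs, ls)) < \<eta>"
      using norm_diff_triangle_le[of "(x,l)" "(xt \<mu>, lt \<mu>)" "norm ((x, l) - (xt \<mu>, lt \<mu>))" "(xs,ls)" "norm ((xt \<mu>, lt \<mu>) - (xs, ls))"]
        near traj_bound[OF \<mu>0 \<mu>h] c4 \<eta>0 unfolding \<rho>_def by linarith
    have dx: "\<bar>x$i - xs$i\<bar> < \<eta>" for i
      using component_le_norm_cart[of "x - xs" i] norm_fst_le[where x="x - xs" and y="l - ls"] dist by simp
    have dl: "\<bar>l$i - ls$i\<bar> < \<eta>" for i
      using component_le_norm_cart[of "l - ls" i] norm_snd_le[where x="x - xs" and y="l - ls"] dist by simp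
    have dxe: "norm (x - xs) < e"
    proof -
      have "norm (x - xs, l - ls) < \<eta>" using dist by simp
      moreover have "\<eta> \<le> e/2" unfolding \<eta>_def by simp
      ultimately show ?thesis using norm_fst_le[where x="x - xs" and y="l - ls"] e by linarith
    qed
    have HM: "norm (Hf x) \<le> M" using Mb[OF dxe] .
    have gl: "\<bar>g x $ i - l$i\<bar> \<le> C1*\<mu>" for i
      using component_le_norm_cart[of "g x - l" i] norm_fst_le[where x="g x - l" and y="\<chi> i. l$i * x$i - \<mu>"] Fb
      unfolding Fmu_def by simp
    have lx: "\<bar>l$i * x$i - \<mu>\<bar> \<le> C1*\<mu>" for i
      using component_le_norm_cart[of "\<chi> i. l$i * x$i - \<mu>" i] norm_snd_le[where x="g x - l" and y="\<chi> i. l$i * x$i - \<mu>"] Fb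
      unfolding Fmu_def by simp
    have AI: "i \<in> A \<or> i \<in> I" for i using kkt(2)[of i] unfolding A_def I_def by auto
    have AIdisj: "A \<inter> I = {}" unfolding A_def I_def by auto
    have UNIV_AI: "UNIV = I \<union> A" using AI by auto
    have lA: "l$i \<ge> m/2" if "i \<in> A" for i
    proof -
      have "\<eta> \<le> m/2" unfolding \<eta>_def by simp
      moreover have "xs$i = 0" using that unfolding A_def by simp
      ultimately show ?thesis using mle[of i] dl[of i] by (simp add: abs_less_iff)
    qed
    have xA: "x$i \<le> cA * \<mu>" if "i \<in> A" for i
    proof -
      have "x$i * (m/2) \<le> x$i * l$i" using lA[OF that] pos by (simp add: mult_left_mono)
      also have "\<dots> \<le> (1+C1)*\<mu>" using lx[of i] by (simp add: algebra_simps)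
      finally show ?thesis unfolding cA_def using mpos by (simp add: field_simps)
    qed
    have xI: "x$i \<ge> m/2" if "i \<in> I" for i
    proof -
      have "ls$i = 0" using kkt(4)[of i] that unfolding I_def by auto
      moreover have "\<eta> \<le> m/2" unfolding \<eta>_def by simp
      ultimately show ?thesis using mle[of i] dx[of i] by (simp add: abs_less_iff)
    qed
    have lxI: "l$i / x$i \<le> (1+C1)*\<mu>*4/m^2" if "i \<in> I" for i
    proof -
      have xp: "x$i > 0" using pos by auto
      have "l$i / x$i = (l$i * x$i) / (x$i * x$i)" using xp by simp
      also have "\<dots> \<le> ((1+C1)*\<mu>) / (x$i*x$i)"
        using lx[of i] xp by (intro divide_right_mono) (auto simp: algebra_simps)
      also have "\<dots> \<le> ((1+C1)*\<mu>) / ((m/2)*(m/2))"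
        using xI[OF that] mpos \<mu>0 C1pos
        by (intro divide_left_mono mult_mono) auto
      also have "\<dots> = (1+C1)*\<mu>*4/m^2" by (simp add: power2_eq_square field_simps)
      finally show ?thesis .
    qed
    have FF: "Fmu g (\<sigma> * \<mu>) x l = Fmu g \<mu> x l + (0, \<chi> i. (1-\<sigma>)*\<mu>)"
      unfolding Fmu_def by (simp add: vec_eq_iff algebra_simps)
    have cn: "norm (\<chi> i::'n. (1-\<sigma>)*\<mu>) \<le> nn * ((1-\<sigma>)*\<mu>)"
      unfolding nn_def by (rule sum_bound_card) (use \<sigma> \<mu>0 in simp)
    have "norm (Fmu g (\<sigma> * \<mu>) x l) \<le> C1*\<mu> + nn*((1-\<sigma>)*\<mu>)"
      unfolding FF using norm_triangle_ineq[of "Fmu g \<mu> x l" "(0::real^'n, \<chi> i::'n. (1-\<sigma>)*\<mu>)"] Fb cn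
      by (simp add: norm_Pair)
    also have "\<dots> \<le> (C1 + nn)*\<mu>" using \<sigma> \<mu>0 nn1
      by (simp add: algebra_simps mult_left_le)
    finally have FFb: "norm (Fmu g (\<sigma> * \<mu>) x l) \<le> (C1 + nn)*\<mu>" .
    have "norm (dxN, dlN) \<le> Kp * norm (Fprime Hf x l (dxN, dlN))" by (rule Kb[OF inball])
    also have "\<dots> \<le> Kp * ((C1 + nn)*\<mu>)" unfolding newton using FFb Kp0 by (simp add: mult_left_mono)
    finally have dN: "norm dxN \<le> K2 * \<mu>" using norm_fst_le[where x=dxN and y=dlN] unfolding K2_def by simp
    define z where "z = (\<chi> i. if i \<in> I then d$i else dxA i)"
    define dlz where "dlz = (\<chi> i. if i \<in> I then dl_ls (\<sigma>*\<mu>) x l d $ i else (Hf x *v z)$i + g x $ i - l$i)"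
    define res where "res = (\<chi> i. l$i * z$i + x$i * dlz$i + (l$i * x$i - \<sigma>*\<mu>))"
    define w where "w = (z - dxN, dlz - dlN)"
    have HZ: "(Hf x *v z)$i = (\<Sum>j\<in>I. Hf x $ i $ j * d$j) + (\<Sum>j\<in>A. Hf x $ i $ j * dxA j)" for i
    proof -
      have "(Hf x *v z)$i = (\<Sum>j\<in>I \<union> A. Hf x $ i $ j * z$j)"
        by (simp add: matrix_vector_mult_def UNIV_AI[symmetric])
      also have "\<dots> = (\<Sum>j\<in>I. Hf x $ i $ j * z$j) + (\<Sum>j\<in>A. Hf x $ i $ j * z$j)"
        by (rule sum.union_disjoint) (use AIdisj in auto)
      also have "\<dots> = (\<Sum>j\<in>I. Hf x $ i $ j * d$j) + (\<Sum>j\<in>A. Hf x $ i $ j * dxA j)"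
        using AIdisj by (auto intro!: sum.cong simp: z_def)
      finally show ?thesis .
    qed
    have newt1: "(Hf x *v dxN)$i - dlN$i = -(g x $ i - l$i)" for i
      using arg_cong[OF newton, of "\<lambda>p. fst p $ i"] unfolding Fprime_def Fmu_def by simp
    have newt2: "l$i * dxN$i + x$i * dlN$i = -(l$i * x$i - \<sigma>*\<mu>)" for i
      using arg_cong[OF newton, of "\<lambda>p. snd p $ i"] unfolding Fprime_def Fmu_def by simp
    have resI: "res$i = 0" if "i \<in> I" for i
    proof -
      have "x$i > 0" using pos by auto
      then show ?thesis using that unfolding res_def dlz_def z_def dl_ls_def
        by (simp add: field_simps)
    qed
    have Fw: "Fprime Hf x l w = (0, res)"
    proof -
      have "(Hf x *v (z - dxN) - (dlz - dlN))$i = 0" for i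
      proof (cases "i \<in> I")
        case True
        have "(\<Sum>j\<in>I. Hf x $ i $ j * d$j) + l$i / x$i * d$i
            = - (g x $ i + (\<Sum>j\<in>A. Hf x $ i $ j * dxA j)) + \<sigma>*\<mu> / x$i"
          using lss True unfolding ls_system_def by blast
        then show ?thesis using True newt1[of i] HZ[of i]
          by (simp add: matrix_vector_mult_diff_distrib dlz_def dl_ls_def algebra_simps)
      next
        case False
        then show ?thesis using newt1[of i]
          by (simp add: matrix_vector_mult_diff_distrib dlz_def algebra_simps)
      qed
      moreover have "l$i * (z - dxN)$i + x$i * (dlz - dlN)$i = res$i" for i
        using newt2[of i] unfolding res_def by (simp add: algebra_simps)
      ultimately show ?thesis unfolding Fprime_def w_def by (simp add: vec_eq_iff)
    qed
    have wb: "norm w \<le> Kp * norm res"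
      using Kb[OF inball, of w] unfolding Fw by (simp add: norm_Pair)
    have Hzb: "\<bar>(Hf x *v z)$i\<bar> \<le> Mz * norm z" for i
    proof -
      have "\<bar>(Hf x *v z)$i\<bar> \<le> nn * norm (Hf x) * norm z" unfolding nn_def by (rule mv_comp_bound)
      also have "\<dots> \<le> Mz * norm z" unfolding Mz_def using HM nn1
        by (intro mult_right_mono mult_left_mono) auto
      finally show ?thesis .
    qed
    have Hii: "\<bar>Hf x $ i $ i\<bar> \<le> M" for i
    proof -
      have "norm (Hf x $ i) \<le> norm (Hf x)" by (rule Finite_Cartesian_Product.norm_nth_le)
      moreover have "\<bar>Hf x $ i $ i\<bar> \<le> norm (Hf x $ i)" by (rule component_le_norm_cart)
      ultimately show ?thesis using HM by linarith
    qed
    have resA: "\<bar>res$i\<bar> \<le> cA*\<mu>*(2*Mz*norm z + C1*\<mu>)" for i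
    proof (cases "i \<in> I")
      case True then show ?thesis using resI cA0 \<mu>0 Mz0 C1pos by simp
    next
      case False
      then have iA: "i \<in> A" using AI by auto
      have xp: "x$i > 0" and lp: "l$i > 0" using pos by auto
      have zi: "z$i = dxA i" unfolding z_def using False by simp
      have dlzi: "dlz$i = (Hf x *v z)$i + g x $ i - l$i" unfolding dlz_def using False by simp
      have zn: "\<bar>z$i\<bar> \<le> norm z" by (rule component_le_norm_cart)
      have bound: "\<bar>res$i\<bar> \<le> x$i * (2*Mz*norm z + C1*\<mu>)"
        using dxAc iA
      proof (elim ballE disjE)
        assume S: "dxA i = dxS g Hf (\<sigma> * \<mu>) x l i"
        have "x$i * M \<le> cA*\<mu>*M" using xA[OF iA] M0 by (simp add: mult_right_mono)
        also have "\<dots> \<le> m/4"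
        proof -
          have "cA*\<mu>*M \<le> (cA*M+1) * \<mu>" using \<mu>0 by (simp add: algebra_simps)
          also have "\<dots> \<le> (cA*M+1) * (m/(4*(cA*M+1)))" using \<mu>2 cA0 M0
            by (intro mult_left_mono) auto
          also have "\<dots> = m/4" using pp1(1) by (simp add: field_simps add_nonneg_pos)
          finally show ?thesis .
        qed
        finally have "x$i * M \<le> m/4" .
        moreover have "\<bar>x$i * Hf x $ i $ i\<bar> \<le> x$i * M" using Hii[of i] xp
          by (simp add: abs_mult mult_left_mono)
        ultimately have Dp: "x$i * Hf x $ i $ i + l$i > 0" using lA[OF iA] mpos by linarith
        have "(x$i * Hf x $ i $ i + l$i) * z$i = \<sigma>*\<mu> - x$i * g x $ i"
          using S Dp unfolding zi dxS_def by (simp add: field_simps)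
        then have lz: "l$i * z$i = \<sigma>*\<mu> - x$i * g x $ i - x$i * Hf x $ i $ i * z$i"
          by (simp add: algebra_simps)
        have "res$i = x$i * ((Hf x *v z)$i - Hf x $ i $ i * z$i)"
          unfolding res_def vec_lambda_beta dlzi lz by (simp add: algebra_simps)
        then have "\<bar>res$i\<bar> = x$i * \<bar>(Hf x *v z)$i - Hf x $ i $ i * z$i\<bar>" using xp by (simp add: abs_mult)
        also have "\<dots> \<le> x$i * (Mz*norm z + M * norm z)"
        proof -
          have "\<bar>Hf x $ i $ i * z$i\<bar> \<le> M * norm z" unfolding abs_mult
            using Hii[of i] zn by (intro mult_mono) auto
          then show ?thesis using Hzb[of i] xp by (intro mult_left_mono) auto
        qed
        also have "\<dots> \<le> x$i * (2*Mz*norm z + C1*\<mu>)"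
        proof -
          have "M * norm z \<le> Mz * norm z" using Mz0 by (intro mult_right_mono) auto
          moreover have "0 \<le> C1*\<mu>" using C1pos \<mu>0 by simp
          ultimately show ?thesis using xp by (intro mult_left_mono) auto
        qed
        finally show ?thesis .
      next
        assume Cc: "dxA i = dxC (\<sigma> * \<mu>) x l i"
        have lz: "l$i * z$i = \<sigma>*\<mu> - l$i * x$i" using Cc lp unfolding zi dxC_def by (simp add: field_simps)
        have "res$i = x$i * ((Hf x *v z)$i + (g x $ i - l$i))"
          unfolding res_def vec_lambda_beta dlzi lz by (simp add: algebra_simps)
        then have "\<bar>res$i\<bar> = x$i * \<bar>(Hf x *v z)$i + (g x $ i - l$i)\<bar>" using xp by (simp add: abs_mult)
        also have "\<dots> \<le> x$i * (Mz*norm z + C1*\<mu>)"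
          using Hzb[of i] gl[of i] xp by (intro mult_left_mono) auto
        also have "\<dots> \<le> x$i * (2*Mz*norm z + C1*\<mu>)"
          using Mz0 xp by (intro mult_left_mono) auto
        finally show ?thesis .
      qed (use iA in auto)
      also have "\<dots> \<le> cA*\<mu>*(2*Mz*norm z + C1*\<mu>)"
        using xA[OF iA] Mz0 C1pos \<mu>0 by (intro mult_right_mono) auto
      finally show ?thesis .
    qed
    have resb: "norm res \<le> nn * (cA*\<mu>*(2*Mz*norm z + C1*\<mu>))"
      unfolding nn_def by (rule sum_bound_card) (rule resA)
    have zb: "norm z \<le> norm w + K2*\<mu>"
    proof -
      have "norm z \<le> norm (z - dxN) + norm dxN" by (metis norm_triangle_sub add.commute)
      then show ?thesis using norm_fst_le[where x="z - dxN" and y="dlz - dlN"] dN unfolding w_def by linarith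
    qed
    have wb2: "norm w \<le> \<alpha>*\<mu>*(2*Mz*(norm w + K2*\<mu>) + C1*\<mu>)"
    proof -
      have "norm w \<le> Kp * (nn * (cA*\<mu>*(2*Mz*norm z + C1*\<mu>)))"
        using wb resb Kp0 by (meson mult_left_mono order_trans)
      also have "\<dots> = \<alpha>*\<mu>*(2*Mz*norm z + C1*\<mu>)" unfolding \<alpha>_def by (simp add: algebra_simps)
      also have "\<dots> \<le> \<alpha>*\<mu>*(2*Mz*(norm w + K2*\<mu>) + C1*\<mu>)"
        using zb \<alpha>0 \<mu>0 Mz0 by (intro mult_left_mono add_right_mono) auto
      finally show ?thesis .
    qed
    have half: "2*Mz*\<alpha>*\<mu> \<le> 1/2"
    proof -
      have "2*Mz*\<alpha>*\<mu> \<le> 2*(Mz*\<alpha>+1)*\<mu>" using \<mu>0 by (simp add: algebra_simps)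
      also have "\<dots> \<le> 2*(Mz*\<alpha>+1)*(1/(4*(Mz*\<alpha>+1)))" using \<mu>3 Mz0 \<alpha>0
        by (intro mult_left_mono) auto
      also have "\<dots> = 1/2" using pp1(2) by (simp add: field_simps add_nonneg_pos)
      finally show ?thesis .
    qed
    have "2*Mz*\<alpha>*\<mu> * norm w \<le> 1/2 * norm w" using half by (intro mult_right_mono) auto
    then have wfin: "norm w \<le> Cx * \<mu>^2" using wb2 unfolding Cx_def
      by (simp add: algebra_simps power2_eq_square)
    have zdiff: "\<bar>z$i - dxN$i\<bar> \<le> Cx*\<mu>^2" for i
      using component_le_norm_cart[of "z - dxN" i] norm_fst_le[where x="z - dxN" and y="dlz - dlN"] wfin
      unfolding w_def by simp
    have "norm (restr I d - restr I dxN) \<le> norm (z - dxN)"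
      by (rule norm_le_componentwise_cart) (simp add: restr_def z_def)
    also have "\<dots> \<le> norm w" using norm_fst_le[where x="z - dxN" and y="dlz - dlN"] unfolding w_def .
    also have "\<dots> \<le> C*\<mu>^2"
    proof -
      have "0 \<le> (Cl+1) * \<mu>^2" using Cl0 by simp
      then show ?thesis using wfin unfolding C_def by (simp add: algebra_simps)
    qed
    finally show "norm (restr I d - restr I dxN) \<le> C * \<mu>^2" .
    have compl: "\<bar>(restr I (dl_ls (\<sigma> * \<mu>) x l d) - restr I dlN)$i\<bar> \<le> Cl1 * \<mu>^3" for i
    proof (cases "i \<in> I")
      case False then show ?thesis using Cl10 \<mu>0 by (simp add: restr_def)
    next
      case True
      have xp: "x$i > 0" and lp: "l$i > 0" using pos by auto
      have e2: "x$i * dlN$i = \<sigma>*\<mu> - l$i * x$i - l$i * dxN$i" using newt2[of i] by (simp add: algebra_simps)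
      have "dlN$i = (x$i * dlN$i) / x$i" using xp by simp
      also have "\<dots> = (\<sigma>*\<mu> - l$i * x$i - l$i * dxN$i) / x$i" unfolding e2 ..
      also have "\<dots> = -l$i + \<sigma>*\<mu>/x$i - l$i/x$i * dxN$i" using xp by (simp add: field_simps)
      finally have dlNi: "dlN$i = -l$i + \<sigma>*\<mu>/x$i - l$i/x$i * dxN$i" .
      have "(restr I (dl_ls (\<sigma> * \<mu>) x l d) - restr I dlN)$i = l$i/x$i * (dxN$i - z$i)"
        using True xp unfolding restr_def dl_ls_def z_def by (simp add: dlNi field_simps)
      then have "\<bar>(restr I (dl_ls (\<sigma> * \<mu>) x l d) - restr I dlN)$i\<bar> = l$i/x$i * \<bar>z$i - dxN$i\<bar>"
        using xp lp by (simp add: abs_mult abs_minus_commute)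
      also have "\<dots> \<le> ((1+C1)*\<mu>*4/m^2) * (Cx*\<mu>^2)"
        using lxI[OF True] zdiff[of i] xp lp C1pos \<mu>0 by (intro mult_mono) auto
      also have "\<dots> = Cl1 * \<mu>^3" unfolding Cl1_def
        by (simp add: power3_eq_cube power2_eq_square algebra_simps)
      finally show ?thesis .
    qed
    have "norm (restr I (dl_ls (\<sigma> * \<mu>) x l d) - restr I dlN) \<le> nn * (Cl1*\<mu>^3)"
      unfolding nn_def by (rule sum_bound_card) (rule compl)
    also have "\<dots> \<le> C * \<mu>^3" using Cx0 \<mu>0 unfolding C_def Cl_def
      by (simp add: algebra_simps)
    finally show "norm (restr I (dl_ls (\<sigma> * \<mu>) x l d) - restr I dlN) \<le> C * \<mu>^3" .
  qed
  qed
  qed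
qed

end
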